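(* Let the setting and notation be as in the context, and suppose the Concentration Assumption and the $L_1$-Consistency Assumption hold. Assume that the (stochastic) map $\theta\mapsto \hat S(\hat{\boldsymbol\beta}_\theta)$ is either continuous with a single root $\tilde\theta$, or non-decreasing (with $\tilde\theta$ a root). Suppose further that for every $\epsilon>0$, $$\mathbf v^{*T}E_{\mathbf t}(\boldsymbol\beta^*_{\theta^*-\epsilon})\cdot \mathbf v^{*T}E_{\mathbf t}(\boldsymbol\beta^*_{\theta^*+\epsilon})<0 .$$ Then for every $\epsilon>0$, $\lim_{n\to\infty}\mathbb P^*(|\tilde\theta-\theta^*|>\epsilon)=0$.
   Context: Data: a random matrix $\mathbf Z\in\mathbb R^{n\times q}$ whose law depends on an unknown parameter; $\mathbb P^*$ denotes probability under the true parameter $\boldsymbol\beta^*\in\mathbb R^d$ (and $\mathbb E^*$ expectation). Asymptotics are as $n\to\infty$; $d$ may depend on $n$. Let $\mathbf t(\mathbf Z,\boldsymbol\beta):\mathbb R^{n\times q}\times\mathbb R^d\to\mathbb R^d$ be an estimating equation, twice differentiable in $\boldsymbol\beta$, with $E_{\mathbf t}(\boldsymbol\beta)=\lim_{n\to\infty}\mathbb E\,\mathbf t(\mathbf Z,\boldsymbol\beta)$, and $\boldsymbol\beta^*$ the unique solution of $E_{\mathbf t}(\boldsymbol\beta)=0$. Let $\mathbf T(\mathbf Z,\boldsymbol\beta)=\partial \mathbf t(\mathbf Z,\boldsymbol\beta)/\partial\boldsymbol\beta\in\mathbb R^{d\times d}$ and $E_{\mathbf T}(\boldsymbol\beta)=\lim_{n\to\infty}\mathbb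 E\,\mathbf T(\mathbf Z,\boldsymbol\beta)$, assumed invertible at $\boldsymbol\beta^*$. Write $\boldsymbol\beta=(\theta,\boldsymbol\gamma^T)^T$ with $\theta\in\mathbb R$ the first coordinate, $\boldsymbol\beta^*=(\theta^*,\boldsymbol\gamma^{*T})^T$; for any $\boldsymbol\beta=(\theta,\boldsymbol\gamma^T)^T$ and scalar $\check\theta$, $\boldsymbol\beta_{\check\theta}:=(\check\theta,\boldsymbol\gamma^T)^T$. Let $\mathbf v^{*T}$ be the first row of $[E_{\mathbf T}(\boldsymbol\beta^* )]^{-1}$. Estimators: $\hat{\boldsymbol\beta}=(\hat\theta,\hat{\boldsymbol\gamma}^T)^T=\arg\min\|\boldsymbol\beta\|_1$ subject to $\|\mathbf t(\mathbf Z,\boldsymbol\beta)\|_\infty\le\lambda$, and $\hat{\mathbf v}=\arg\min\|\mathbf v\|_1$ subject to $\|\mathbf v^T\mathbf T(\mathbf Z,\hat{\boldsymbol\beta})-\mathbf e_1\|_\infty\le\lambda'$, where $\mathbf e_1=(1,0,\dots,0)$ is a row vector and $\lambda,\lambda'>0$ are tuning parameters. Let $\hat S(\boldsymbol\beta)=\hat{\mathbf v}^T\mathbf t(\mathbf Z,\boldsymbol\beta)$; $\tilde\theta$ denotes a root of $\theta\mapsto\hat S(\hat{\boldsymbol\beta}_\theta)=\hat S(\theta,\hat{\boldsymbol\gamma})$. For a matrix $\mathbf A$, $[\mathbf A]_{-1}$ is $\mathbf A$ with its first column removed. Concentration Assumption: there is a neighborhood $\mathcal N_{\theta^*}$ of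 $\theta^*$ and functions $r_1(n,\theta),r_2(n,\theta),r_3(n,\theta)$ with $\sup_{\theta\in\mathcal N_{\theta^*}}\max_i r_i(n,\theta)=o(1)$ such that for all $\theta\in\mathcal N_{\theta^*}$: $\lim_n\mathbb P^*(\|\mathbf t(\mathbf Z,\boldsymbol\beta^*_\theta)-E_{\mathbf t}(\boldsymbol\beta^*_\theta)\|_\infty\le r_1(n,\theta))=1$; $\lim_n\mathbb P^*(|\mathbf v^{*T}\mathbf t(\mathbf Z,\boldsymbol\beta^*_\theta)-\mathbf v^{*T}E_{\mathbf t}(\boldsymbol\beta^*_\theta)|\le r_2(n,\theta))=1$; $\lim_n\mathbb P^*(\sup_{\nu\in[0,1]}\|\hat{\mathbf v}^T\mathbf T(\mathbf Z,\tilde{\boldsymbol\beta}_\nu)-\mathbf v^{*T}E_{\mathbf T}(\boldsymbol\beta^*_\theta)\|_\infty\le r_3(n,\theta))=1$ where $\tilde{\boldsymbol\beta}_\nu=\nu\hat{\boldsymbol\beta}_\theta+(1-\nu)\boldsymbol\beta^*_\theta$; and moreover $\sup_{\theta\in\mathcal N_{\theta^*}}\|E_{\mathbf t}(\boldsymbol\beta^*_\theta)\|_\infty<\infty$ and $\sup_{\theta\in\mathcal N_{\theta^*}}\|\mathbf v^{*T}[E_{\mathbf T}(\boldsymbol\beta^*_\theta)]_{-1}\|_\infty<\infty$. $L_1$-Consistency Assumption: $\lim_n\mathbb P^*(\|\hat{\boldsymbol\beta}-\boldsymbol\beta^*\|_1\le r_4(n))=1$ and $\lim_n\mathbb P^*(\|\hat{\mathbf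 v}-\mathbf v^*\|_1\le r_5(n))=1$ with $\max(r_4(n),r_5(n))=o(1)$. *)

theory Defs
  imports "HOL-Probability.Probability"
begin

text \<open>Vectors are modelled as real sequences \<open>nat \<Rightarrow> real\<close>; in the n-th model only
the coordinates below \<open>d n\<close> are meaningful. Coordinate 0 is \<open>\<theta>\<close>.\<close>

definition l1 :: "nat \<Rightarrow> (nat \<Rightarrow> real) \<Rightarrow> real" where
  "l1 d x = (\<Sum>j<d. \<bar>x j\<bar>)"

definition supn :: "nat \<Rightarrow> (nat \<Rightarrow> real) \<Rightarrow> real" where
  "supn d x = Max (insert 0 ((\<lambda>j. \<bar>x j\<bar>) ` {..<d}))"

definition supp_in :: "nat \<Rightarrow> (nat \<Rightarrow> real) \<Rightarrow> bool" where
  "supp_in d x \<longleftrightarrow> (\<forall>j. d \<le> j \<longrightarrow> x j = 0)"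

definition e1 :: "nat \<Rightarrow> real" where
  "e1 j = (if j = 0 then 1 else 0)"

text \<open>Frechet differentiability of \<open>f : R^d \<rightarrow> R\<close> at \<open>x\<close> with gradient \<open>D\<close>
  (using the l1 norm; all norms on R^d are equivalent).\<close>
definition frechet_diff :: "nat \<Rightarrow> ((nat \<Rightarrow> real) \<Rightarrow> real) \<Rightarrow> (nat \<Rightarrow> real) \<Rightarrow> (nat \<Rightarrow> real) \<Rightarrow> bool" where
  "frechet_diff d f D x \<longleftrightarrow>
     (\<forall>e>0. \<exists>\<delta>>0. \<forall>h. supp_in d h \<and> l1 d h < \<delta> \<longrightarrow>
        \<bar>f (\<lambda>j. x j + h j) - f x - (\<Sum>j<d. D j * h j)\<bar> \<le> e * l1 d h)"

text \<open>Products with the (possibly infinite) limiting vector \<open>v*\<close>.\<close>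
definition vdot :: "(nat \<Rightarrow> real) \<Rightarrow> (nat \<Rightarrow> real) \<Rightarrow> real" where
  "vdot v x = infsum (\<lambda>j. v j * x j) UNIV"

definition vrow :: "(nat \<Rightarrow> real) \<Rightarrow> (nat \<Rightarrow> nat \<Rightarrow> real) \<Rightarrow> nat \<Rightarrow> real" where
  "vrow v A j = infsum (\<lambda>k. v k * A k j) UNIV"

definition active :: "(nat \<Rightarrow> nat) \<Rightarrow> nat set" where
  "active d = {j. \<exists>n. j < d n}"

definition is_l1_min :: "nat \<Rightarrow> ((nat \<Rightarrow> real) \<Rightarrow> (nat \<Rightarrow> real)) \<Rightarrow> real \<Rightarrow> (nat \<Rightarrow> real) \<Rightarrow> bool" where
  "is_l1_min d g lam b \<longleftrightarrow> supp_in d b \<and> supn d (g b) \<le> lam \<and>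
     (\<forall>c. supp_in d c \<and> supn d (g c) \<le> lam \<longrightarrow> l1 d b \<le> l1 d c)"

definition Shat :: "nat \<Rightarrow> (nat \<Rightarrow> real) \<Rightarrow> ((nat \<Rightarrow> real) \<Rightarrow> (nat \<Rightarrow> real)) \<Rightarrow> (nat \<Rightarrow> real) \<Rightarrow> real" where
  "Shat d v tz \<beta> = (\<Sum>k<d. v k * tz \<beta> k)"

end

theory Submission
  imports Defs
begin


lemma supn_ge: "j < d \<Longrightarrow> \<bar>x j\<bar> \<le> supn d x"
  unfolding supn_def by (intro Max_ge) auto

lemma supn_nonneg: "0 \<le> supn d x"
  unfolding supn_def by (intro Max_ge) auto

lemma l1_nonneg: "0 \<le> l1 d x"
  unfolding l1_def by (intro sum_nonneg) auto

lemma l1_scale: "l1 d (\<lambda>j. c * h j) = \<bar>c\<bar> * l1 d h"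
  unfolding l1_def by (simp add: abs_mult sum_distrib_left)

lemma fd_dir:
  assumes fd: "frechet_diff d f D x" and sh: "supp_in d h"
  shows "((\<lambda>s. f (\<lambda>j. x j + (s - s0) * h j)) has_real_derivative (\<Sum>j<d. D j * h j)) (at s0)"
proof -
  define L where "L = l1 d h"
  have L0: "0 \<le> L" unfolding L_def by (rule l1_nonneg)
  have x0: "(\<lambda>j. x j + (s0 - s0) * h j) = x" by auto
  show ?thesis
    unfolding has_field_derivative_iff x0
  proof (rule LIM_I)
    fix r :: real assume r: "0 < r"
    define e where "e = r / (L + 1)"
    have e: "0 < e" using r L0 unfolding e_def by auto
    from fd e obtain \<delta> where \<delta>: "\<delta> > 0" and H: "\<forall>h. supp_in d h \<and> l1 d h < \<delta> \<longrightarrow>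
        \<bar>f (\<lambda>j. x j + h j) - f x - (\<Sum>j<d. D j * h j)\<bar> \<le> e * l1 d h"
      unfolding frechet_diff_def by blast
    show "\<exists>s>0. \<forall>y. y \<noteq> s0 \<and> norm (y - s0) < s \<longrightarrow>
           norm ((f (\<lambda>j. x j + (y - s0) * h j) - f x) / (y - s0) - (\<Sum>j<d. D j * h j)) < r"
    proof (intro exI[of _ "\<delta> / (L + 1)"] conjI allI impI)
      show "0 < \<delta> / (L + 1)" using \<delta> L0 by auto
      fix y assume y: "y \<noteq> s0 \<and> norm (y - s0) < \<delta> / (L + 1)"
      define c where "c = y - s0"
      have c0: "c \<noteq> 0" using y unfolding c_def by auto
      have cs: "\<bar>c\<bar> < \<delta> / (L + 1)" using y unfolding c_def by auto
      have "\<bar>c\<bar> * L < \<delta>"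
      proof -
        have "\<bar>c\<bar> * L \<le> \<delta> / (L + 1) * L" using cs L0 by (intro mult_right_mono) auto
        also have "\<dots> < \<delta>" using \<delta> L0 by (simp add: field_simps)
        finally show ?thesis .
      qed
      moreover have "supp_in d (\<lambda>j. c * h j)" using sh unfolding supp_in_def by auto
      ultimately have B: "\<bar>f (\<lambda>j. x j + c * h j) - f x - (\<Sum>j<d. D j * (c * h j))\<bar> \<le> e * (\<bar>c\<bar> * L)"
        using H[rule_format, of "\<lambda>j. c * h j"] by (simp add: l1_scale L_def)
      have eq: "(f (\<lambda>j. x j + c * h j) - f x) / c - (\<Sum>j<d. D j * h j)
          = (f (\<lambda>j. x j + c * h j) - f x - (\<Sum>j<d. D j * (c * h j))) / c"
        using c0 by (simp add: field_simps sum_distrib_left)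
      have "\<bar>(f (\<lambda>j. x j + c * h j) - f x) / c - (\<Sum>j<d. D j * h j)\<bar> \<le> e * L"
        unfolding eq using B c0 by (simp add: abs_divide divide_le_eq mult_ac)
      also have "e * L < r" using r L0 unfolding e_def by (simp add: field_simps)
      finally show "norm ((f (\<lambda>j. x j + (y - s0) * h j) - f x) / (y - s0) - (\<Sum>j<d. D j * h j)) < r"
        unfolding c_def by simp
    qed
  qed
qed

lemma core:
  fixes tz :: "(nat \<Rightarrow> real) \<Rightarrow> nat \<Rightarrow> real" and Tz :: "(nat \<Rightarrow> real) \<Rightarrow> nat \<Rightarrow> nat \<Rightarrow> real"
  assumes loc: "\<forall>\<beta> \<beta>'. (\<forall>j<d. \<beta> j = \<beta>' j) \<longrightarrow> tz \<beta> = tz \<beta>'"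
    and der: "\<forall>\<beta> i. i < d \<longrightarrow> frechet_diff d (\<lambda>b. tz b i) (\<lambda>j. Tz \<beta> i j) \<beta>"
    and h1: "supn d (\<lambda>j. tz (bs(0 := \<theta>)) j - E j) \<le> r1"
    and h2: "\<bar>(\<Sum>j<d. vs j * tz (bs(0 := \<theta>)) j) - c\<bar> \<le> r2"
    and h3: "\<forall>\<nu>\<in>{0..1}. supn d (\<lambda>j. (\<Sum>k<d. vh k *
               Tz (\<lambda>i. \<nu> * (bh(0 := \<theta>)) i + (1 - \<nu>) * (bs(0 := \<theta>)) i) k j) - rw j) \<le> r3"
    and B1: "\<forall>j. \<bar>E j\<bar> \<le> B1" and B2: "\<forall>j\<ge>1. \<bar>rw j\<bar> \<le> B2"
    and l1b: "l1 d (\<lambda>j. bh j - bs j) \<le> R" and l1v: "l1 d (\<lambda>j. vh j - vs j) \<le> R"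
  shows "\<bar>Shat d vh tz (bh(0 := \<theta>)) - c\<bar> \<le> r2 + R * (r1 + B1) + (r3 + B2) * R"
proof -
  define a where "a = bh(0 := \<theta>)"
  define b where "b = bs(0 := \<theta>)"
  define p where "p = (\<lambda>\<nu>::real. \<lambda>i. \<nu> * a i + (1 - \<nu>) * b i)"
  define hd where "hd = (\<lambda>j. if j < d then a j - b j else 0)"
  define g where "g = (\<lambda>\<nu>. \<Sum>k<d. vh k * tz (p \<nu>) k)"
  define g' where "g' = (\<lambda>\<nu>. \<Sum>k<d. vh k * (\<Sum>j<d. Tz (p \<nu>) k j * hd j))"
  have shd: "supp_in d hd" unfolding supp_in_def hd_def by auto
  have D: "(g has_real_derivative g' \<nu>) (at \<nu>)" for \<nu>
    unfolding g_def g'_def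
  proof (intro DERIV_sum DERIV_cmult)
    fix k assume k: "k \<in> {..<d}"
    have eqf: "(\<lambda>\<nu>'. tz (p \<nu>') k) = (\<lambda>s. (\<lambda>bb. tz bb k) (\<lambda>j. p \<nu> j + (s - \<nu>) * hd j))"
    proof
      fix s
      have "tz (p s) = tz (\<lambda>j. p \<nu> j + (s - \<nu>) * hd j)"
        by (rule loc[rule_format]) (simp add: p_def hd_def algebra_simps)
      then show "tz (p s) k = (\<lambda>bb. tz bb k) (\<lambda>j. p \<nu> j + (s - \<nu>) * hd j)" by simp
    qed
    show "((\<lambda>\<nu>'. tz (p \<nu>') k) has_real_derivative (\<Sum>j<d. Tz (p \<nu>) k j * hd j)) (at \<nu>)"
      unfolding eqf using fd_dir[OF der[rule_format, of k "p \<nu>"] shd, of \<nu>] k by simp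
  qed
  obtain z where z: "0 < z" "z < 1" "g 1 - g 0 = (1 - 0) * g' z"
    using MVT2[of 0 1 g g'] D by auto
  have p1: "p 1 = a" and p0: "p 0 = b" unfolding p_def by auto
  have r1n: "0 \<le> r1" using h1 supn_nonneg[of d "\<lambda>j. tz (bs(0 := \<theta>)) j - E j"] by linarith
  have r3n: "0 \<le> r3" using h3[rule_format, of 0] supn_nonneg[of d "\<lambda>j. (\<Sum>k<d. vh k * Tz (\<lambda>i. 0 * (bh(0 := \<theta>)) i + (1 - 0) * (bs(0 := \<theta>)) i) k j) - rw j"] by simp
  have B1n: "0 \<le> B1" using B1[rule_format, of 0] abs_ge_zero[of "E 0"] by linarith
  have B2n: "0 \<le> B2" using B2[rule_format, of 1] abs_ge_zero[of "rw 1"] by linarith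
  define w where "w = (\<lambda>j. \<Sum>k<d. vh k * Tz (p z) k j)"
  have g'eq: "g' z = (\<Sum>j<d. w j * hd j)"
  proof -
    have "g' z = (\<Sum>k<d. \<Sum>j<d. vh k * Tz (p z) k j * hd j)"
      by (simp add: g'_def sum_distrib_left mult.assoc)
    also have "\<dots> = (\<Sum>j<d. \<Sum>k<d. vh k * Tz (p z) k j * hd j)" by (rule sum.swap)
    also have "\<dots> = (\<Sum>j<d. w j * hd j)" by (simp add: w_def sum_distrib_right)
    finally show ?thesis .
  qed
  have wb: "\<bar>w j * hd j\<bar> \<le> (r3 + B2) * \<bar>bh j - bs j\<bar>" if j: "j < d" for j
  proof (cases "j = 0")
    case True then show ?thesis using r3n B2n by (simp add: hd_def a_def b_def)
  next
    case False
    have "\<bar>w j - rw j\<bar> \<le> r3"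
      using h3[rule_format, of z] z supn_ge[OF j, of "\<lambda>j. w j - rw j"]
      unfolding w_def p_def a_def b_def by auto
    moreover have "\<bar>rw j\<bar> \<le> B2" using B2 False by auto
    ultimately have "\<bar>w j\<bar> \<le> r3 + B2" by linarith
    moreover have "hd j = bh j - bs j" using False j unfolding hd_def a_def b_def by auto
    ultimately show ?thesis by (simp add: abs_mult mult_right_mono)
  qed
  have partB: "\<bar>g 1 - g 0\<bar> \<le> (r3 + B2) * R"
  proof -
    have "\<bar>g 1 - g 0\<bar> = \<bar>\<Sum>j<d. w j * hd j\<bar>" using z g'eq by simp
    also have "\<dots> \<le> (\<Sum>j<d. \<bar>w j * hd j\<bar>)" by (rule sum_abs)
    also have "\<dots> \<le> (\<Sum>j<d. (r3 + B2) * \<bar>bh j - bs j\<bar>)" by (intro sum_mono wb) auto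
    also have "\<dots> = (r3 + B2) * l1 d (\<lambda>j. bh j - bs j)" unfolding l1_def by (simp add: sum_distrib_left)
    also have "\<dots> \<le> (r3 + B2) * R" using l1b r3n B2n by (intro mult_left_mono) auto
    finally show ?thesis .
  qed
  have tb: "\<bar>tz b k\<bar> \<le> r1 + B1" if k: "k < d" for k
  proof -
    have "\<bar>tz b k - E k\<bar> \<le> r1" using supn_ge[OF k, of "\<lambda>j. tz b j - E j"] h1 unfolding b_def by auto
    then show ?thesis using B1[rule_format, of k] by linarith
  qed
  have partA: "\<bar>(\<Sum>k<d. vh k * tz b k) - (\<Sum>k<d. vs k * tz b k)\<bar> \<le> R * (r1 + B1)"
  proof -
    have "\<bar>(\<Sum>k<d. vh k * tz b k) - (\<Sum>k<d. vs k * tz b k)\<bar> = \<bar>\<Sum>k<d. (vh k - vs k) * tz b k\<bar>"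
      by (simp add: sum_subtractf left_diff_distrib)
    also have "\<dots> \<le> (\<Sum>k<d. \<bar>(vh k - vs k) * tz b k\<bar>)" by (rule sum_abs)
    also have "\<dots> \<le> (\<Sum>k<d. \<bar>vh k - vs k\<bar> * (r1 + B1))"
      by (intro sum_mono) (auto simp: abs_mult intro!: mult_left_mono tb)
    also have "\<dots> = l1 d (\<lambda>j. vh j - vs j) * (r1 + B1)" unfolding l1_def by (simp add: sum_distrib_right)
    also have "\<dots> \<le> R * (r1 + B1)" using l1v r1n B1n by (intro mult_right_mono) auto
    finally show ?thesis .
  qed
  have Sh: "Shat d vh tz (bh(0 := \<theta>)) = g 1" unfolding Shat_def g_def p1 a_def by simp
  have g0: "g 0 = (\<Sum>k<d. vh k * tz b k)" unfolding g_def p0 by simp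
  have h2': "\<bar>(\<Sum>j<d. vs j * tz b j) - c\<bar> \<le> r2" using h2 unfolding b_def .
  show ?thesis using partA partB h2' unfolding Sh using g0 by linarith
qed

lemma root_loc:
  fixes f :: "real \<Rightarrow> real"
  assumes fr: "f r = 0" and sh: "(continuous_on UNIV f \<and> (\<forall>\<theta>. f \<theta> = 0 \<longrightarrow> \<theta> = r)) \<or> mono f"
    and pq: "p \<le> q" and s: "f p * f q < 0"
  shows "p \<le> r \<and> r \<le> q"
  using sh
proof
  assume c: "continuous_on UNIV f \<and> (\<forall>\<theta>. f \<theta> = 0 \<longrightarrow> \<theta> = r)"
  then have cc: "continuous_on {p..q} f" using continuous_on_subset by blast
  have "\<exists>x. p \<le> x \<and> x \<le> q \<and> f x = 0"
  proof (cases "f p \<le> 0")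
    case True
    then have "0 \<le> f q" using s by (smt (verit) mult_nonpos_nonpos)
    then show ?thesis using IVT'[of f p 0 q, OF True _ pq cc] by auto
  next
    case False
    then have "f q \<le> 0" using s by (smt (verit) mult_pos_pos)
    then show ?thesis using IVT2'[of f q 0 p, OF _ _ pq cc] False by auto
  qed
  then show ?thesis using c by auto
next
  assume m: "mono f"
  have "\<not> (f q < 0 \<and> 0 < f p)" using m pq by (metis monoD not_le order_less_trans order.strict_trans2 less_imp_le)
  then have fpq: "f p < 0 \<and> 0 < f q" using s by (smt (verit) mult_nonneg_nonneg mult_nonpos_nonpos)
  have "p \<le> r"
  proof (rule ccontr)
    assume "\<not> p \<le> r" then have "f r \<le> f p" using m by (simp add: monoD)
    then show False using fpq fr by simp
  qed
  moreover have "r \<le> q"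
  proof (rule ccontr)
    assume "\<not> r \<le> q" then have "f q \<le> f r" using m by (simp add: monoD)
    then show False using fpq fr by simp
  qed
  ultimately show ?thesis by simp
qed

lemma meas_bound:
  assumes P: "prob_space M" and A: "A \<subseteq> space M" and dis: "\<And>\<omega>. \<omega> \<in> A \<Longrightarrow> \<omega> \<in> G \<Longrightarrow> False"
  shows "measure M A \<le> 1 - measure M G"
proof -
  interpret prob_space M by (rule P)
  show ?thesis
  proof (cases "A \<in> sets M \<and> G \<in> sets M")
    case True
    then have "A \<subseteq> space M - G" using A dis by auto
    then have "measure M A \<le> measure M (space M - G)" using True by (intro finite_measure_mono) auto
    also have "\<dots> = 1 - measure M G" using True prob_compl by auto
    finally show ?thesis .
  next
    case False
    show ?thesis
    proof (cases "A \<in> sets M")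
      case True
      then have "G \<notin> sets M" using False by auto
      then show ?thesis using measure_notin_sets[of G M] prob_le_1[of A] by linarith
    next
      case F: False
      show ?thesis using measure_notin_sets[OF F] prob_le_1[of G] by linarith
    qed
  qed
qed

lemma meas_int:
  assumes P: "prob_space M"
  shows "1 - measure M (G \<inter> H) \<le> (1 - measure M G) + (1 - measure M H)"
proof -
  interpret prob_space M by (rule P)
  show ?thesis
  proof (cases "G \<in> sets M \<and> H \<in> sets M")
    case True
    have "1 - measure M (G \<inter> H) = measure M (space M - (G \<inter> H))" using True prob_compl by auto
    also have "space M - (G \<inter> H) = (space M - G) \<union> (space M - H)" by auto
    also have "measure M \<dots> \<le> measure M (space M - G) + measure M (space M - H)"
      using True by (intro measure_subadditive) (auto simp: emeasure_finite)
    also have "\<dots> = (1 - measure M G) + (1 - measure M H)" using True prob_compl by auto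
    finally show ?thesis .
  next
    case False
    have a: "1 - measure M G \<ge> 0" "1 - measure M H \<ge> 0" using prob_le_1[of G] prob_le_1[of H] by auto
    show ?thesis
    proof (cases "G \<in> sets M")
      case True
      then have n: "H \<notin> sets M" using False by auto
      show ?thesis using measure_notin_sets[OF n] a measure_nonneg[of M "G \<inter> H"] by linarith
    next
      case n: False
      show ?thesis using measure_notin_sets[OF n] a measure_nonneg[of M "G \<inter> H"] by linarith
    qed
  qed
qed


lemma sign_lem:
  fixes x y a b :: real
  assumes "\<bar>x - a\<bar> < \<bar>a\<bar>" "\<bar>y - b\<bar> < \<bar>b\<bar>" "a * b < 0"
  shows "x * y < 0"
proof -
  from assms(3) have "(0 < a \<and> b < 0) \<or> (a < 0 \<and> 0 < b)" by (auto simp: mult_less_0_iff)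
  then show ?thesis
  proof
    assume h: "0 < a \<and> b < 0"
    then have "0 < x" "y < 0" using assms(1,2) by (auto simp: abs_if split: if_splits)
    then show ?thesis by (simp add: mult_pos_neg)
  next
    assume h: "a < 0 \<and> 0 < b"
    then have "x < 0" "0 < y" using assms(1,2) by (auto simp: abs_if split: if_splits)
    then show ?thesis by (simp add: mult_neg_pos)
  qed
qed
theorem theorem1:
  fixes M :: "nat \<Rightarrow> 'w measure"
    and d :: "nat \<Rightarrow> nat"
    and Z :: "nat \<Rightarrow> 'w \<Rightarrow> (nat \<Rightarrow> nat \<Rightarrow> real)"
    and t :: "nat \<Rightarrow> (nat \<Rightarrow> nat \<Rightarrow> real) \<Rightarrow> (nat \<Rightarrow> real) \<Rightarrow> (nat \<Rightarrow> real)"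
    and T :: "nat \<Rightarrow> (nat \<Rightarrow> nat \<Rightarrow> real) \<Rightarrow> (nat \<Rightarrow> real) \<Rightarrow> (nat \<Rightarrow> nat \<Rightarrow> real)"
    and Et :: "(nat \<Rightarrow> real) \<Rightarrow> (nat \<Rightarrow> real)"
    and ET :: "(nat \<Rightarrow> real) \<Rightarrow> (nat \<Rightarrow> nat \<Rightarrow> real)"
    and bstar vstar :: "nat \<Rightarrow> real"
    and lam lam' :: "nat \<Rightarrow> real"
    and bhat vhat :: "nat \<Rightarrow> 'w \<Rightarrow> nat \<Rightarrow> real"
    and thtil :: "nat \<Rightarrow> 'w \<Rightarrow> real"
    and N :: "real set"
    and r1 r2 r3 :: "nat \<Rightarrow> real \<Rightarrow> real"
    and r4 r5 :: "nat \<Rightarrow> real"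
  assumes prob: "\<forall>n. prob_space (M n)"
    and dpos: "\<forall>n. 1 \<le> d n"
    and t_local: "\<forall>n z \<beta> \<beta>'. (\<forall>j<d n. \<beta> j = \<beta>' j) \<longrightarrow> t n z \<beta> = t n z \<beta>'"
    and t_supp: "\<forall>n z \<beta> j. d n \<le> j \<longrightarrow> t n z \<beta> j = 0"
    and T_deriv: "\<forall>n z \<beta> i. i < d n \<longrightarrow>
                    frechet_diff (d n) (\<lambda>b. t n z b i) (\<lambda>j. T n z \<beta> i j) \<beta>"
    and T_diff2: "\<forall>n z \<beta> i j. i < d n \<and> j < d n \<longrightarrow>
                    (\<exists>D. frechet_diff (d n) (\<lambda>b. T n z b i j) D \<beta>)"
    and Et_lim: "\<forall>\<beta> i. (\<lambda>n. integral\<^sup>L (M n) (\<lambda>\<omega>. t n (Z n \<omega>) \<beta> i)) \<longlonglongrightarrow> Et \<beta> i"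
    and ET_lim: "\<forall>\<beta> i j. (\<lambda>n. integral\<^sup>L (M n) (\<lambda>\<omega>. T n (Z n \<omega>) \<beta> i j)) \<longlonglongrightarrow> ET \<beta> i j"
    and root: "\<forall>i. Et bstar i = 0"
    and root_unique: "\<forall>\<beta>. (\<forall>i. Et \<beta> i = 0) \<longrightarrow> (\<forall>j\<in>active d. \<beta> j = bstar j)"
    and vstar_def: "\<exists>Inv. (\<forall>i\<in>active d. \<forall>j\<in>active d.
                        ((\<lambda>k. Inv i k * ET bstar k j) has_sum (if i = j then 1 else 0)) (active d) \<and>
                        ((\<lambda>k. ET bstar i k * Inv k j) has_sum (if i = j then 1 else 0)) (active d))
                     \<and> (\<forall>j. vstar j = (if j \<in> active d then Inv 0 j else 0))"
    and lam_pos: "\<forall>n. 0 < lam n \<and> 0 < lam' n"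
    and bhat_def: "\<forall>n \<omega>. (\<exists>b. supp_in (d n) b \<and> supn (d n) (t n (Z n \<omega>) b) \<le> lam n) \<longrightarrow>
                      is_l1_min (d n) (t n (Z n \<omega>)) (lam n) (bhat n \<omega>)"
    and vhat_def: "\<forall>n \<omega>. (\<exists>v. supp_in (d n) v \<and>
                         supn (d n) (\<lambda>j. (\<Sum>k<d n. v k * T n (Z n \<omega>) (bhat n \<omega>) k j) - e1 j) \<le> lam' n) \<longrightarrow>
                      is_l1_min (d n) (\<lambda>v j. (\<Sum>k<d n. v k * T n (Z n \<omega>) (bhat n \<omega>) k j) - e1 j)
                                (lam' n) (vhat n \<omega>)"
    and root_shape: "\<forall>n \<omega>.
        Shat (d n) (vhat n \<omega>) (t n (Z n \<omega>)) ((bhat n \<omega>)(0 := thtil n \<omega>)) = 0 \<and>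
        ((continuous_on UNIV (\<lambda>\<theta>. Shat (d n) (vhat n \<omega>) (t n (Z n \<omega>)) ((bhat n \<omega>)(0 := \<theta>))) \<and>
          (\<forall>\<theta>. Shat (d n) (vhat n \<omega>) (t n (Z n \<omega>)) ((bhat n \<omega>)(0 := \<theta>)) = 0 \<longrightarrow> \<theta> = thtil n \<omega>))
         \<or> mono (\<lambda>\<theta>. Shat (d n) (vhat n \<omega>) (t n (Z n \<omega>)) ((bhat n \<omega>)(0 := \<theta>))))"
    and N_nhd: "open N \<and> bstar 0 \<in> N"
    and r_small: "\<forall>e>0. eventually (\<lambda>n. \<forall>\<theta>\<in>N. max (max (r1 n \<theta>) (r2 n \<theta>)) (r3 n \<theta>) \<le> e) sequentially"
    and conc1: "\<forall>\<theta>\<in>N. (\<lambda>n. measure (M n) {\<omega> \<in> space (M n).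
                  supn (d n) (\<lambda>j. t n (Z n \<omega>) (bstar(0 := \<theta>)) j - Et (bstar(0 := \<theta>)) j) \<le> r1 n \<theta>})
                \<longlonglongrightarrow> 1"
    and conc2: "\<forall>\<theta>\<in>N. (\<lambda>n. measure (M n) {\<omega> \<in> space (M n).
                  \<bar>(\<Sum>j<d n. vstar j * t n (Z n \<omega>) (bstar(0 := \<theta>)) j) - vdot vstar (Et (bstar(0 := \<theta>)))\<bar>
                    \<le> r2 n \<theta>})
                \<longlonglongrightarrow> 1"
    and conc3: "\<forall>\<theta>\<in>N. (\<lambda>n. measure (M n) {\<omega> \<in> space (M n).
                  \<forall>\<nu>\<in>{0..1}. supn (d n) (\<lambda>j.
                     (\<Sum>k<d n. vhat n \<omega> k *
                        T n (Z n \<omega>) (\<lambda>i. \<nu> * ((bhat n \<omega>)(0 := \<theta>)) i + (1 - \<nu>) * (bstar(0 := \<theta>)) i) k j)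
                     - vrow vstar (ET (bstar(0 := \<theta>))) j) \<le> r3 n \<theta>})
                \<longlonglongrightarrow> 1"
    and Et_bdd: "\<exists>B. \<forall>\<theta>\<in>N. \<forall>j. \<bar>Et (bstar(0 := \<theta>)) j\<bar> \<le> B"
    and vET_bdd: "\<exists>B. \<forall>\<theta>\<in>N. \<forall>j\<ge>1. \<bar>vrow vstar (ET (bstar(0 := \<theta>))) j\<bar> \<le> B"
    and L1_beta: "(\<lambda>n. measure (M n) {\<omega> \<in> space (M n).
                    l1 (d n) (\<lambda>j. bhat n \<omega> j - bstar j) \<le> r4 n}) \<longlonglongrightarrow> 1"
    and L1_v: "(\<lambda>n. measure (M n) {\<omega> \<in> space (M n).
                    l1 (d n) (\<lambda>j. vhat n \<omega> j - vstar j) \<le> r5 n}) \<longlonglongrightarrow> 1"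
    and r45: "(\<lambda>n. max (r4 n) (r5 n)) \<longlonglongrightarrow> 0"
    and sign: "\<forall>\<epsilon>>0. vdot vstar (Et (bstar(0 := bstar 0 - \<epsilon>))) *
                      vdot vstar (Et (bstar(0 := bstar 0 + \<epsilon>))) < 0"
  shows "\<forall>\<epsilon>>0. (\<lambda>n. measure (M n) {\<omega> \<in> space (M n). \<bar>thtil n \<omega> - bstar 0\<bar> > \<epsilon>})
                  \<longlonglongrightarrow> 0"
proof (intro allI impI)
  fix \<epsilon> :: real assume \<epsilon>: "0 < \<epsilon>"
  obtain \<delta> where \<delta>: "0 < \<delta>" "ball (bstar 0) \<delta> \<subseteq> N" using N_nhd openE by blast
  define \<epsilon>' where "\<epsilon>' = min \<epsilon> (\<delta> / 2)"
  have \<epsilon>': "0 < \<epsilon>'" "\<epsilon>' \<le> \<epsilon>" "\<epsilon>' < \<delta>" using \<epsilon> \<delta> unfolding \<epsilon>'_def by auto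
  define \<theta>m where "\<theta>m = bstar 0 - \<epsilon>'"
  define \<theta>p where "\<theta>p = bstar 0 + \<epsilon>'"
  have \<theta>N: "\<theta>m \<in> N" "\<theta>p \<in> N" using \<delta>(2) \<epsilon>' unfolding \<theta>m_def \<theta>p_def by (auto simp: dist_real_def)
  define c where "c = (\<lambda>\<theta>. vdot vstar (Et (bstar(0 := \<theta>))))"
  have cs: "c \<theta>m * c \<theta>p < 0" using sign \<epsilon>' unfolding c_def \<theta>m_def \<theta>p_def by auto
  define m where "m = min \<bar>c \<theta>m\<bar> \<bar>c \<theta>p\<bar>"
  have m0: "0 < m" using cs unfolding m_def by auto
  obtain B1 where B1: "\<forall>\<theta>\<in>N. \<forall>j. \<bar>Et (bstar(0 := \<theta>)) j\<bar> \<le> B1" using Et_bdd by blast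
  obtain B2 where B2: "\<forall>\<theta>\<in>N. \<forall>j\<ge>1. \<bar>vrow vstar (ET (bstar(0 := \<theta>))) j\<bar> \<le> B2" using vET_bdd by blast
  have B1n: "0 \<le> B1" using B1 \<theta>N(1) abs_ge_zero order_trans by blast
  have B2n: "0 \<le> B2" using B2 \<theta>N(1) abs_ge_zero order_trans by (meson le_refl)
  define e0 where "e0 = m / 4"
  have e0: "0 < e0" using m0 unfolding e0_def by auto
  define K where "K = 2 * e0 + B1 + B2"
  have K0: "0 \<le> K" using e0 B1n B2n unfolding K_def by auto
  define \<delta>0 where "\<delta>0 = m / (2 * (1 + K))"
  have \<delta>0: "0 < \<delta>0" using m0 K0 unfolding \<delta>0_def by auto
  have \<delta>0K: "\<delta>0 * K < m / 2"
  proof -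
    have "\<delta>0 * K < \<delta>0 * (1 + K)" using \<delta>0 by simp
    also have "\<dots> = m / 2" unfolding \<delta>0_def using K0 by (simp add: field_simps)
    finally show ?thesis .
  qed
  define R where "R = (\<lambda>n. max (r4 n) (r5 n))"
  have ev1: "eventually (\<lambda>n. \<forall>\<theta>\<in>N. max (max (r1 n \<theta>) (r2 n \<theta>)) (r3 n \<theta>) \<le> e0) sequentially"
    using r_small e0 by blast
  have ev2: "eventually (\<lambda>n. R n < \<delta>0) sequentially"
    using r45 \<delta>0 unfolding R_def by (rule order_tendstoD)
  define G1 where "G1 = (\<lambda>\<theta> n. {\<omega> \<in> space (M n).
                  supn (d n) (\<lambda>j. t n (Z n \<omega>) (bstar(0 := \<theta>)) j - Et (bstar(0 := \<theta>)) j) \<le> r1 n \<theta>})"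
  define G2 where "G2 = (\<lambda>\<theta> n. {\<omega> \<in> space (M n).
                  \<bar>(\<Sum>j<d n. vstar j * t n (Z n \<omega>) (bstar(0 := \<theta>)) j) - vdot vstar (Et (bstar(0 := \<theta>)))\<bar>
                    \<le> r2 n \<theta>})"
  define G3 where "G3 = (\<lambda>\<theta> n. {\<omega> \<in> space (M n).
                  \<forall>\<nu>\<in>{0..1}. supn (d n) (\<lambda>j.
                     (\<Sum>k<d n. vhat n \<omega> k *
                        T n (Z n \<omega>) (\<lambda>i. \<nu> * ((bhat n \<omega>)(0 := \<theta>)) i + (1 - \<nu>) * (bstar(0 := \<theta>)) i) k j)
                     - vrow vstar (ET (bstar(0 := \<theta>))) j) \<le> r3 n \<theta>})"
  define Gb where "Gb = (\<lambda>n. {\<omega> \<in> space (M n). l1 (d n) (\<lambda>j. bhat n \<omega> j - bstar j) \<le> r4 n})"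
  define Gv where "Gv = (\<lambda>n. {\<omega> \<in> space (M n). l1 (d n) (\<lambda>j. vhat n \<omega> j - vstar j) \<le> r5 n})"
  define S where "S = (\<lambda>n \<omega> \<theta>. Shat (d n) (vhat n \<omega>) (t n (Z n \<omega>)) ((bhat n \<omega>)(0 := \<theta>)))"
  have key: "\<bar>S n \<omega> \<theta> - c \<theta>\<bar> < m"
    if \<theta>: "\<theta> \<in> N" and n1: "\<forall>\<theta>\<in>N. max (max (r1 n \<theta>) (r2 n \<theta>)) (r3 n \<theta>) \<le> e0"
      and n2: "R n < \<delta>0"
      and \<omega>: "\<omega> \<in> G1 \<theta> n" "\<omega> \<in> G2 \<theta> n" "\<omega> \<in> G3 \<theta> n" "\<omega> \<in> Gb n" "\<omega> \<in> Gv n"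
    for n \<omega> \<theta>
  proof -
    have lb: "l1 (d n) (\<lambda>j. bhat n \<omega> j - bstar j) \<le> R n" using \<omega>(4) unfolding Gb_def R_def by auto
    have lv: "l1 (d n) (\<lambda>j. vhat n \<omega> j - vstar j) \<le> R n" using \<omega>(5) unfolding Gv_def R_def by auto
    have R0: "0 \<le> R n" using lb l1_nonneg order_trans by blast
    have "\<bar>S n \<omega> \<theta> - c \<theta>\<bar> \<le> r2 n \<theta> + R n * (r1 n \<theta> + B1) + (r3 n \<theta> + B2) * R n"
      unfolding S_def c_def
    proof (rule core[where E = "Et (bstar(0 := \<theta>))" and rw = "vrow vstar (ET (bstar(0 := \<theta>)))"
          and Tz = "T n (Z n \<omega>)" and vs = vstar])
      show "\<forall>\<beta> \<beta>'. (\<forall>j<d n. \<beta> j = \<beta>' j) \<longrightarrow> t n (Z n \<omega>) \<beta> = t n (Z n \<omega>) \<beta>'" using t_local by blast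
      show "\<forall>\<beta> i. i < d n \<longrightarrow> frechet_diff (d n) (\<lambda>b. t n (Z n \<omega>) b i) (\<lambda>j. T n (Z n \<omega>) \<beta> i j) \<beta>"
        using T_deriv by blast
      show "supn (d n) (\<lambda>j. t n (Z n \<omega>) (bstar(0 := \<theta>)) j - Et (bstar(0 := \<theta>)) j) \<le> r1 n \<theta>"
        using \<omega>(1) unfolding G1_def by auto
      show "\<bar>(\<Sum>j<d n. vstar j * t n (Z n \<omega>) (bstar(0 := \<theta>)) j) - vdot vstar (Et (bstar(0 := \<theta>)))\<bar> \<le> r2 n \<theta>"
        using \<omega>(2) unfolding G2_def by auto
      show "\<forall>\<nu>\<in>{0..1}. supn (d n) (\<lambda>j. (\<Sum>k<d n. vhat n \<omega> k *
               T n (Z n \<omega>) (\<lambda>i. \<nu> * ((bhat n \<omega>)(0 := \<theta>)) i + (1 - \<nu>) * (bstar(0 := \<theta>)) i) k j)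
               - vrow vstar (ET (bstar(0 := \<theta>))) j) \<le> r3 n \<theta>"
        using \<omega>(3) unfolding G3_def by auto
      show "\<forall>j. \<bar>Et (bstar(0 := \<theta>)) j\<bar> \<le> B1" using B1 \<theta> by blast
      show "\<forall>j\<ge>1. \<bar>vrow vstar (ET (bstar(0 := \<theta>))) j\<bar> \<le> B2" using B2 \<theta> by blast
    qed (fact lb lv)+
    also have "\<dots> \<le> e0 + R n * (e0 + B1) + (e0 + B2) * R n"
    proof -
      have r: "r1 n \<theta> \<le> e0" "r2 n \<theta> \<le> e0" "r3 n \<theta> \<le> e0" using n1 \<theta> by auto
      have "R n * (r1 n \<theta> + B1) \<le> R n * (e0 + B1)" using R0 r by (intro mult_left_mono) auto
      moreover have "(r3 n \<theta> + B2) * R n \<le> (e0 + B2) * R n" using R0 r by (intro mult_right_mono) auto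
      ultimately show ?thesis using r by linarith
    qed
    also have "\<dots> = e0 + R n * K" unfolding K_def by (simp add: algebra_simps)
    also have "\<dots> \<le> e0 + \<delta>0 * K" using n2 K0 by (simp add: mult_right_mono)
    also have "\<dots> < m" using \<delta>0K m0 unfolding e0_def by linarith
    finally show ?thesis .
  qed
  define G where "G = (\<lambda>n. G1 \<theta>m n \<inter> (G2 \<theta>m n \<inter> (G3 \<theta>m n \<inter> (G1 \<theta>p n \<inter> (G2 \<theta>p n \<inter> (G3 \<theta>p n \<inter> (Gb n \<inter> Gv n)))))))"
  define bad where "bad = (\<lambda>n. {\<omega> \<in> space (M n). \<bar>thtil n \<omega> - bstar 0\<bar> > \<epsilon>})"
  have det: "\<not> \<bar>thtil n \<omega> - bstar 0\<bar> > \<epsilon>"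
    if n1: "\<forall>\<theta>\<in>N. max (max (r1 n \<theta>) (r2 n \<theta>)) (r3 n \<theta>) \<le> e0" and n2: "R n < \<delta>0"
      and \<omega>: "\<omega> \<in> G n" for n \<omega>
  proof -
    have km: "\<bar>S n \<omega> \<theta>m - c \<theta>m\<bar> < \<bar>c \<theta>m\<bar>"
      using key[OF \<theta>N(1) n1 n2] \<omega> unfolding G_def m_def by auto
    have kp: "\<bar>S n \<omega> \<theta>p - c \<theta>p\<bar> < \<bar>c \<theta>p\<bar>"
      using key[OF \<theta>N(2) n1 n2] \<omega> unfolding G_def m_def by auto
    have "S n \<omega> \<theta>m * S n \<omega> \<theta>p < 0" by (rule sign_lem[OF km kp cs])
    moreover have "\<theta>m \<le> \<theta>p" using \<epsilon>' unfolding \<theta>m_def \<theta>p_def by auto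
    ultimately have "\<theta>m \<le> thtil n \<omega> \<and> thtil n \<omega> \<le> \<theta>p"
      using root_loc[of "S n \<omega>" "thtil n \<omega>" \<theta>m \<theta>p] root_shape unfolding S_def by blast
    then show ?thesis using \<epsilon>' unfolding \<theta>m_def \<theta>p_def by auto
  qed
  define u where "u = (\<lambda>n. (1 - measure (M n) (G1 \<theta>m n)) + (1 - measure (M n) (G2 \<theta>m n))
     + (1 - measure (M n) (G3 \<theta>m n)) + (1 - measure (M n) (G1 \<theta>p n)) + (1 - measure (M n) (G2 \<theta>p n))
     + (1 - measure (M n) (G3 \<theta>p n)) + (1 - measure (M n) (Gb n)) + (1 - measure (M n) (Gv n)))"
  have bnd: "measure (M n) (bad n) \<le> u n"
    if n1: "\<forall>\<theta>\<in>N. max (max (r1 n \<theta>) (r2 n \<theta>)) (r3 n \<theta>) \<le> e0" and n2: "R n < \<delta>0" for n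
  proof -
    have P: "prob_space (M n)" using prob by blast
    have "measure (M n) (bad n) \<le> 1 - measure (M n) (G n)"
      by (rule meas_bound[OF P]) (use det[OF n1 n2] in \<open>auto simp: bad_def\<close>)
    also have "\<dots> \<le> u n"
      unfolding G_def u_def using meas_int[OF P] by (smt (verit))
    finally show ?thesis .
  qed
  have lim1: "(\<lambda>n. 1 - measure (M n) (A n)) \<longlonglongrightarrow> 0" if "(\<lambda>n. measure (M n) (A n)) \<longlonglongrightarrow> 1" for A
    using tendsto_diff[OF tendsto_const[of 1] that] by simp
  have ulim: "u \<longlonglongrightarrow> 0"
  proof -
    have a: "(\<lambda>n. measure (M n) (G1 \<theta> n)) \<longlonglongrightarrow> 1" "(\<lambda>n. measure (M n) (G2 \<theta> n)) \<longlonglongrightarrow> 1"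
      "(\<lambda>n. measure (M n) (G3 \<theta> n)) \<longlonglongrightarrow> 1" if "\<theta> \<in> N" for \<theta>
      using conc1 conc2 conc3 that unfolding G1_def G2_def G3_def by auto
    have b: "(\<lambda>n. measure (M n) (Gb n)) \<longlonglongrightarrow> 1" "(\<lambda>n. measure (M n) (Gv n)) \<longlonglongrightarrow> 1"
      using L1_beta L1_v unfolding Gb_def Gv_def by auto
    show ?thesis unfolding u_def
      using tendsto_add[OF tendsto_add[OF tendsto_add[OF tendsto_add[OF tendsto_add[OF tendsto_add[OF tendsto_add[OF
        lim1[OF a(1)[OF \<theta>N(1)]] lim1[OF a(2)[OF \<theta>N(1)]]] lim1[OF a(3)[OF \<theta>N(1)]]]
        lim1[OF a(1)[OF \<theta>N(2)]]] lim1[OF a(2)[OF \<theta>N(2)]]] lim1[OF a(3)[OF \<theta>N(2)]]]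
        lim1[OF b(1)]] lim1[OF b(2)]] by simp
  qed
  have "(\<lambda>n. measure (M n) (bad n)) \<longlonglongrightarrow> 0"
  proof (rule tendsto_sandwich[OF _ _ tendsto_const ulim])
    show "eventually (\<lambda>n. 0 \<le> measure (M n) (bad n)) sequentially" by simp
    show "eventually (\<lambda>n. measure (M n) (bad n) \<le> u n) sequentially"
      using eventually_conj[OF ev1 ev2] by eventually_elim (use bnd in blast)
  qed
  then show "(\<lambda>n. measure (M n) {\<omega> \<in> space (M n). \<bar>thtil n \<omega> - bstar 0\<bar> > \<epsilon>}) \<longlonglongrightarrow> 0"
    unfolding bad_def .
qed

end
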